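(* Let $A$ be an arbitrary group. Then $A$ can be embedded into a group $G$ such that $PJ(G)=J_0(G)=X(G)$. Hence Jensen's functional equation $f(xy)+f(xy^{-1})=2f(x)$ is stable on $G$, i.e. for every function $f\colon G\to\mathbb{R}$ for which there is $c>0$ with $|f(xy)+f(xy^{-1})-2f(x)|\le c$ for all $x,y\in G$, there is $j\colon G\to\mathbb{R}$ with $j(xy)+j(xy^{-1})=2j(x)$ for all $x,y$ and $j-f$ bounded.
   Context: For a group $G$: a function $f\colon G\to\mathbb{R}$ is quasi-Jensen if there is $c>0$ with $|f(xy)+f(xy^{-1})-2f(x)|\le c$ for all $x,y\in G$; it is pseudo-Jensen if it is quasi-Jensen and $f(x^n)=nf(x)$ for all $x\in G$, $n\in\mathbb{Z}$. $PJ(G)$ is the space of real-valued pseudo-Jensen functions on $G$. $J_0(G)$ is the space of functions $f\colon G\to\mathbb{R}$ with $f(xy)+f(xy^{-1})=2f(x)$ for all $x,y\in G$ and $f(1)=0$. $X(G)$ is the space of homomorphisms $G\to(\mathbb{R},+)$. *)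

theory Defs
  imports "HOL-Algebra.Algebra"
begin

text \<open>Real-valued functions on a group G are represented as functions on the element
type that vanish outside the carrier (extensional), so that the function spaces
below can be compared as sets.\<close>

definition quasi_jensen :: "('g, 'b) monoid_scheme \<Rightarrow> ('g \<Rightarrow> real) \<Rightarrow> bool" where
  "quasi_jensen G f \<longleftrightarrow> (\<exists>c>0. \<forall>x\<in>carrier G. \<forall>y\<in>carrier G.
      \<bar>f (x \<otimes>\<^bsub>G\<^esub> y) + f (x \<otimes>\<^bsub>G\<^esub> inv\<^bsub>G\<^esub> y) - 2 * f x\<bar> \<le> c)"

definition pseudo_jensen :: "('g, 'b) monoid_scheme \<Rightarrow> ('g \<Rightarrow> real) \<Rightarrow> bool" where
  "pseudo_jensen G f \<longleftrightarrow> quasi_jensen G f \<and>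
      (\<forall>x\<in>carrier G. \<forall>n::int. f (x [^]\<^bsub>G\<^esub> n) = real_of_int n * f x)"

definition PJ :: "('g, 'b) monoid_scheme \<Rightarrow> ('g \<Rightarrow> real) set" where
  "PJ G = {f. f \<in> extensional (carrier G) \<and> pseudo_jensen G f}"

definition J0 :: "('g, 'b) monoid_scheme \<Rightarrow> ('g \<Rightarrow> real) set" where
  "J0 G = {f. f \<in> extensional (carrier G) \<and>
      (\<forall>x\<in>carrier G. \<forall>y\<in>carrier G.
         f (x \<otimes>\<^bsub>G\<^esub> y) + f (x \<otimes>\<^bsub>G\<^esub> inv\<^bsub>G\<^esub> y) = 2 * f x) \<and>
      f (one G) = 0}"

definition Hom_R :: "('g, 'b) monoid_scheme \<Rightarrow> ('g \<Rightarrow> real) set" where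
  "Hom_R G = {f. f \<in> extensional (carrier G) \<and>
      (\<forall>x\<in>carrier G. \<forall>y\<in>carrier G. f (x \<otimes>\<^bsub>G\<^esub> y) = f x + f y)}"

definition jensen_stable :: "('g, 'b) monoid_scheme \<Rightarrow> bool" where
  "jensen_stable G \<longleftrightarrow> (\<forall>f::'g \<Rightarrow> real.
     (\<exists>c>0. \<forall>x\<in>carrier G. \<forall>y\<in>carrier G.
        \<bar>f (x \<otimes>\<^bsub>G\<^esub> y) + f (x \<otimes>\<^bsub>G\<^esub> inv\<^bsub>G\<^esub> y) - 2 * f x\<bar> \<le> c) \<longrightarrow>
     (\<exists>j::'g \<Rightarrow> real.
        (\<forall>x\<in>carrier G. \<forall>y\<in>carrier G.
           j (x \<otimes>\<^bsub>G\<^esub> y) + j (x \<otimes>\<^bsub>G\<^esub> inv\<^bsub>G\<^esub> y) = 2 * j x) \<and>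
        (\<exists>B. \<forall>x\<in>carrier G. \<bar>j x - f x\<bar> \<le> B)))"

end

theory Submission imports Defs begin

abbreviation SG :: "('c \<Rightarrow> 'c) monoid" where "SG \<equiv> BijGroup UNIV"

lemma SG_carrier: "carrier SG = {f. bij f}"
  by (auto simp: BijGroup_def Bij_def extensional_def)

lemma SG_mult: "x \<in> carrier SG \<Longrightarrow> y \<in> carrier SG \<Longrightarrow> x \<otimes>\<^bsub>SG\<^esub> y = x \<circ> y"
  by (auto simp: BijGroup_def compose_def SG_carrier[unfolded BijGroup_def, simplified])

lemma SG_one: "\<one>\<^bsub>SG\<^esub> = id"
  by (auto simp: BijGroup_def)

lemma SG_group: "group SG" by (rule group_BijGroup)

lemma SG_app: "x \<in> carrier SG \<Longrightarrow> y \<in> carrier SG \<Longrightarrow> (x \<otimes>\<^bsub>SG\<^esub> y) p = x (y p)"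
  by (simp add: SG_mult)

lemma pow_app:
  assumes g: "g \<in> carrier SG"
  shows "(g [^]\<^bsub>SG\<^esub> (i::int)) ((g [^]\<^bsub>SG\<^esub> (j::int)) p) = (g [^]\<^bsub>SG\<^esub> (i + j)) p"
proof -
  interpret group SG by (rule SG_group)
  show ?thesis using g by (simp add: int_pow_mult SG_app)
qed

lemma pow_wd:
  assumes g: "g \<in> carrier SG" and e: "(g [^]\<^bsub>SG\<^esub> (k::int)) p = (g [^]\<^bsub>SG\<^esub> (l::int)) p"
  shows "(g [^]\<^bsub>SG\<^esub> (-k)) p = (g [^]\<^bsub>SG\<^esub> (-l)) p"
proof -
  have "(g [^]\<^bsub>SG\<^esub> (-k)) p = (g [^]\<^bsub>SG\<^esub> (-k-l)) ((g [^]\<^bsub>SG\<^esub> l) p)"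
    using pow_app[OF g] by simp
  also have "\<dots> = (g [^]\<^bsub>SG\<^esub> (-k-l)) ((g [^]\<^bsub>SG\<^esub> k) p)" using e by simp
  also have "\<dots> = (g [^]\<^bsub>SG\<^esub> (-l)) p" using pow_app[OF g] by simp
  finally show ?thesis .
qed

lemma two_involutions:
  assumes g: "g \<in> carrier SG"
  shows "\<exists>s\<in>carrier SG. \<exists>t\<in>carrier SG. s \<otimes>\<^bsub>SG\<^esub> s = \<one>\<^bsub>SG\<^esub> \<and>
           t \<otimes>\<^bsub>SG\<^esub> t = \<one>\<^bsub>SG\<^esub> \<and> g = s \<otimes>\<^bsub>SG\<^esub> t"
proof -
  interpret group SG by (rule SG_group)
  define P where "P k = g [^]\<^bsub>SG\<^esub> (k::int)" for k
  have P0: "P 0 y = y" for y by (simp add: P_def SG_one)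
  have P1: "P 1 = g" using g by (simp add: P_def)
  have PP: "P i (P j y) = P (i + j) y" for i j y unfolding P_def by (rule pow_app[OF g])
  have Pwd: "P k y = P l y \<Longrightarrow> P (-k) y = P (-l) y" for k l y
    unfolding P_def by (rule pow_wd[OF g])
  define orb where "orb y = range (\<lambda>k. P k y)" for y
  define rep where "rep y = (SOME z. z \<in> orb y)" for y
  have orb_eq: "z \<in> orb y \<Longrightarrow> orb z = orb y" for z y
  proof -
    assume "z \<in> orb y"
    then obtain k where z: "z = P k y" by (auto simp: orb_def)
    have "P j z = P (j + k) y" for j using z PP by simp
    moreover have "P j y = P (j - k) z" for j using z PP by simp
    ultimately show "orb z = orb y" unfolding orb_def image_def
      by (auto; metis add_diff_cancel diff_add_cancel)
  qed
  have rep_in: "rep y \<in> orb y" for y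
  proof -
    have "y \<in> orb y" using P0 by (auto simp: orb_def image_def) (metis)
    then show ?thesis unfolding rep_def by (rule someI)
  qed
  have rep_eq: "z \<in> orb y \<Longrightarrow> rep z = rep y" for z y
    unfolding rep_def using orb_eq by simp
  have y_from_rep: "\<exists>k. P k (rep y) = y" for y
  proof -
    have "y \<in> orb (rep y)" using orb_eq[OF rep_in] rep_in P0
      by (metis orb_def rangeI)
    then show ?thesis by (auto simp: orb_def) (metis)
  qed
  define s where "s y = P (- (SOME k. P k (rep y) = y)) (rep y)" for y
  have s_eval: "P k (rep y) = y \<Longrightarrow> s y = P (-k) (rep y)" for k y
  proof -
    assume h: "P k (rep y) = y"
    have "P (SOME k. P k (rep y) = y) (rep y) = y" using y_from_rep by (rule someI_ex)
    then have "P (SOME k. P k (rep y) = y) (rep y) = P k (rep y)" using h by simp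
    then show ?thesis unfolding s_def by (rule Pwd)
  qed
  have rep_P: "rep (P j y) = rep y" for j y
    by (rule rep_eq) (auto simp: orb_def)
  have ss: "s (s y) = y" for y
  proof -
    obtain k where k: "P k (rep y) = y" using y_from_rep by blast
    have sy: "s y = P (-k) (rep y)" by (rule s_eval[OF k])
    have r: "rep (s y) = rep y" unfolding sy rep_P by (metis k rep_P)
    have "P (-k) (rep (s y)) = s y" using sy r by simp
    then have "s (s y) = P (- (-k)) (rep (s y))" by (rule s_eval)
    then show ?thesis using r k by simp
  qed
  define t where "t y = s (g y)" for y
  have tt: "t (t y) = y" for y
  proof -
    obtain k where k: "P k (rep y) = y" using y_from_rep by blast
    have gy: "g y = P (1 + k) (rep y)" using k PP P1 by metis
    have r1: "rep (g y) = rep y" using rep_P[of 1 y] P1 by simp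
    have "t y = P (-(1+k)) (rep y)" unfolding t_def using s_eval[of "1+k" "g y"] gy r1 by simp
    then have "g (t y) = P (-k) (rep y)" using PP P1 by (metis add.commute add_uminus_conv_diff diff_add_cancel minus_add_distrib)
    moreover have "rep (P (-k) (rep y)) = rep y" using rep_P rep_eq[OF rep_in[of y]] by simp
    ultimately have "t (t y) = P (-(-k)) (rep y)" unfolding t_def using s_eval[of "-k" "g (t y)"]
      by (metis t_def)
    then show ?thesis using k by simp
  qed
  have sbij: "bij s" by (metis bij_betw_byWitness ss UNIV_I subset_UNIV image_subset_iff)
  have tbij: "bij t" by (metis bij_betw_byWitness tt UNIV_I subset_UNIV image_subset_iff)
  have sc: "s \<in> carrier SG" unfolding SG_carrier using sbij by simp
  have tc: "t \<in> carrier SG" unfolding SG_carrier using tbij by simp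
  show ?thesis
  proof (intro bexI conjI)
    show "s \<otimes>\<^bsub>SG\<^esub> s = \<one>\<^bsub>SG\<^esub>" using sc by (simp add: SG_mult SG_one fun_eq_iff ss)
    show "t \<otimes>\<^bsub>SG\<^esub> t = \<one>\<^bsub>SG\<^esub>" using tc by (simp add: SG_mult SG_one fun_eq_iff tt)
    show "g = s \<otimes>\<^bsub>SG\<^esub> t" using sc tc by (simp add: SG_mult fun_eq_iff t_def ss)
  qed (use sc tc in auto)
qed


definition invprop :: "('g, 'b) monoid_scheme \<Rightarrow> bool" where
  "invprop G \<longleftrightarrow> (\<forall>g\<in>carrier G. \<exists>s\<in>carrier G. \<exists>t\<in>carrier G. s \<otimes>\<^bsub>G\<^esub> s = \<one>\<^bsub>G\<^esub> \<and>
           t \<otimes>\<^bsub>G\<^esub> t = \<one>\<^bsub>G\<^esub> \<and> g = s \<otimes>\<^bsub>G\<^esub> t)"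

lemma SG_invprop: "invprop SG"
  unfolding invprop_def using two_involutions by blast

lemma bound_lemma:
  fixes f :: "'g \<Rightarrow> real"
  assumes G: "group G" and ip: "invprop G"
    and q: "\<forall>x\<in>carrier G. \<forall>y\<in>carrier G.
      \<bar>f (x \<otimes>\<^bsub>G\<^esub> y) + f (x \<otimes>\<^bsub>G\<^esub> inv\<^bsub>G\<^esub> y) - 2 * f x\<bar> \<le> c"
    and g: "g \<in> carrier G"
  shows "\<bar>f g - f \<one>\<^bsub>G\<^esub>\<bar> \<le> c"
proof -
  interpret group G by (rule G)
  obtain s t where s: "s \<in> carrier G" and t: "t \<in> carrier G" and ss: "s \<otimes>\<^bsub>G\<^esub> s = \<one>\<^bsub>G\<^esub>"
    and tt: "t \<otimes>\<^bsub>G\<^esub> t = \<one>\<^bsub>G\<^esub>" and gst: "g = s \<otimes>\<^bsub>G\<^esub> t"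
    using ip g unfolding invprop_def by blast
  have is_: "inv\<^bsub>G\<^esub> s = s" using ss s by (simp add: inv_equality)
  have it: "inv\<^bsub>G\<^esub> t = t" using tt t by (simp add: inv_equality)
  have 1: "\<bar>f s + f s - 2 * f \<one>\<^bsub>G\<^esub>\<bar> \<le> c" using q s is_ by (metis one_closed l_one)
  have 2: "\<bar>f (s \<otimes>\<^bsub>G\<^esub> t) + f (s \<otimes>\<^bsub>G\<^esub> t) - 2 * f s\<bar> \<le> c" using q s t it by metis
  show ?thesis using 1 2 unfolding gst by linarith
qed

definition Zs :: "('g, 'b) monoid_scheme \<Rightarrow> ('g \<Rightarrow> real) set" where
  "Zs G = {f. f \<in> extensional (carrier G) \<and> (\<forall>x\<in>carrier G. f x = 0)}"

lemma PJ_Z: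
  assumes G: "group G" and ip: "invprop G"
  shows "PJ G = Zs G"
proof
  interpret group G by (rule G)
  show "PJ G \<subseteq> Zs G"
  proof
    fix f assume "f \<in> PJ G"
    then have e: "f \<in> extensional (carrier G)" and qj: "quasi_jensen G f"
      and hm: "\<forall>x\<in>carrier G. \<forall>n::int. f (x [^]\<^bsub>G\<^esub> n) = real_of_int n * f x"
      by (auto simp: PJ_def pseudo_jensen_def)
    obtain c where q: "\<forall>x\<in>carrier G. \<forall>y\<in>carrier G.
      \<bar>f (x \<otimes>\<^bsub>G\<^esub> y) + f (x \<otimes>\<^bsub>G\<^esub> inv\<^bsub>G\<^esub> y) - 2 * f x\<bar> \<le> c" using qj unfolding quasi_jensen_def by blast
    have f1: "f \<one>\<^bsub>G\<^esub> = 0" using hm[rule_format, of "\<one>\<^bsub>G\<^esub>" 0] by simp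
    have "f x = 0" if x: "x \<in> carrier G" for x
    proof (rule ccontr)
      assume nz: "f x \<noteq> 0"
      obtain n :: nat where n: "real n > (\<bar>c\<bar> + 1) / \<bar>f x\<bar>" using reals_Archimedean2 by blast
      have "\<bar>f (x [^]\<^bsub>G\<^esub> int n) - f \<one>\<^bsub>G\<^esub>\<bar> \<le> c" by (rule bound_lemma[OF G ip q]) (use x in simp)
      then have "real n * \<bar>f x\<bar> \<le> c" using hm x f1 by (simp add: abs_mult)
      moreover have "real n * \<bar>f x\<bar> > \<bar>c\<bar> + 1" using n nz by (simp add: field_simps)
      ultimately show False by linarith
    qed
    then show "f \<in> Zs G" using e by (simp add: Zs_def)
  qed
  show "Zs G \<subseteq> PJ G"
  proof
    fix f assume "f \<in> Zs G"
    then have e: "f \<in> extensional (carrier G)" and z: "\<forall>x\<in>carrier G. f x = 0" by (auto simp: Zs_def)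
    have "quasi_jensen G f" unfolding quasi_jensen_def
      by (rule exI[of _ 1]) (simp add: z)
    moreover have "\<forall>x\<in>carrier G. \<forall>n::int. f (x [^]\<^bsub>G\<^esub> n) = real_of_int n * f x" by (simp add: z)
    ultimately show "f \<in> PJ G" using e by (simp add: PJ_def pseudo_jensen_def)
  qed
qed

lemma J0_Z:
  assumes G: "group G" and ip: "invprop G"
  shows "J0 G = Zs G"
proof
  interpret group G by (rule G)
  show "J0 G \<subseteq> Zs G"
  proof
    fix f assume "f \<in> J0 G"
    then have e: "f \<in> extensional (carrier G)" and f1: "f \<one>\<^bsub>G\<^esub> = 0"
      and q0: "\<forall>x\<in>carrier G. \<forall>y\<in>carrier G. f (x \<otimes>\<^bsub>G\<^esub> y) + f (x \<otimes>\<^bsub>G\<^esub> inv\<^bsub>G\<^esub> y) = 2 * f x"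
      by (auto simp: J0_def)
    have q: "\<forall>x\<in>carrier G. \<forall>y\<in>carrier G.
      \<bar>f (x \<otimes>\<^bsub>G\<^esub> y) + f (x \<otimes>\<^bsub>G\<^esub> inv\<^bsub>G\<^esub> y) - 2 * f x\<bar> \<le> 0" using q0 by simp
    have "f x = 0" if "x \<in> carrier G" for x using bound_lemma[OF G ip q that] f1 by simp
    then show "f \<in> Zs G" using e by (simp add: Zs_def)
  qed
  show "Zs G \<subseteq> J0 G"
    by (auto simp: Zs_def J0_def)
qed

lemma Hom_Z:
  assumes G: "group G" and ip: "invprop G"
  shows "Hom_R G = Zs G"
proof
  interpret group G by (rule G)
  show "Hom_R G \<subseteq> Zs G"
  proof
    fix f assume "f \<in> Hom_R G"
    then have e: "f \<in> extensional (carrier G)"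
      and hm: "\<forall>x\<in>carrier G. \<forall>y\<in>carrier G. f (x \<otimes>\<^bsub>G\<^esub> y) = f x + f y"
      by (auto simp: Hom_R_def)
    have f1: "f \<one>\<^bsub>G\<^esub> = 0" using hm[rule_format, of "\<one>\<^bsub>G\<^esub>" "\<one>\<^bsub>G\<^esub>"] by simp
    have q: "\<forall>x\<in>carrier G. \<forall>y\<in>carrier G.
      \<bar>f (x \<otimes>\<^bsub>G\<^esub> y) + f (x \<otimes>\<^bsub>G\<^esub> inv\<^bsub>G\<^esub> y) - 2 * f x\<bar> \<le> 0"
    proof (intro ballI)
      fix x y assume x: "x \<in> carrier G" and y: "y \<in> carrier G"
      have "f y + f (inv\<^bsub>G\<^esub> y) = 0" using hm[rule_format, of y "inv\<^bsub>G\<^esub> y"] x y f1 by simp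
      then show "\<bar>f (x \<otimes>\<^bsub>G\<^esub> y) + f (x \<otimes>\<^bsub>G\<^esub> inv\<^bsub>G\<^esub> y) - 2 * f x\<bar> \<le> 0" using hm x y by simp
    qed
    have "f x = 0" if "x \<in> carrier G" for x using bound_lemma[OF G ip q that] f1 by simp
    then show "f \<in> Zs G" using e by (simp add: Zs_def)
  qed
  show "Zs G \<subseteq> Hom_R G"
    by (auto simp: Zs_def Hom_R_def)
qed

lemma stable:
  assumes G: "group G" and ip: "invprop G"
  shows "jensen_stable G"
  unfolding jensen_stable_def
proof (intro allI impI)
  interpret group G by (rule G)
  fix f :: "_ \<Rightarrow> real"
  assume "\<exists>c>0. \<forall>x\<in>carrier G. \<forall>y\<in>carrier G.
        \<bar>f (x \<otimes>\<^bsub>G\<^esub> y) + f (x \<otimes>\<^bsub>G\<^esub> inv\<^bsub>G\<^esub> y) - 2 * f x\<bar> \<le> c"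
  then obtain c where q: "\<forall>x\<in>carrier G. \<forall>y\<in>carrier G.
        \<bar>f (x \<otimes>\<^bsub>G\<^esub> y) + f (x \<otimes>\<^bsub>G\<^esub> inv\<^bsub>G\<^esub> y) - 2 * f x\<bar> \<le> c" by blast
  have "\<forall>x\<in>carrier G. \<bar>(0::real) - f x\<bar> \<le> c + \<bar>f \<one>\<^bsub>G\<^esub>\<bar>"
    using bound_lemma[OF G ip q] by fastforce
  then show "\<exists>j::_ \<Rightarrow> real. (\<forall>x\<in>carrier G. \<forall>y\<in>carrier G.
           j (x \<otimes>\<^bsub>G\<^esub> y) + j (x \<otimes>\<^bsub>G\<^esub> inv\<^bsub>G\<^esub> y) = 2 * j x) \<and> (\<exists>B. \<forall>x\<in>carrier G. \<bar>j x - f x\<bar> \<le> B)"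
    by (intro exI[of _ "\<lambda>_. 0"]) auto
qed

theorem theorem4p1:
  fixes A :: "('a, 'b) monoid_scheme"
  assumes "group A"
  shows "\<exists>(G :: ('a \<times> nat \<Rightarrow> 'a \<times> nat) monoid) h.
           group G \<and> h \<in> hom A G \<and> inj_on h (carrier A) \<and>
           PJ G = J0 G \<and> J0 G = Hom_R G \<and> jensen_stable G"
proof -
  interpret A: group A by (rule assms)
  define h :: "'a \<Rightarrow> 'a \<times> nat \<Rightarrow> 'a \<times> nat" where
    "h a = (\<lambda>(x, n). if x \<in> carrier A then (a \<otimes>\<^bsub>A\<^esub> x, n) else (x, n))" for a
  have hc: "h a \<circ> h b = h (a \<otimes>\<^bsub>A\<^esub> b)" if "a \<in> carrier A" "b \<in> carrier A" for a b
    using that by (auto simp: h_def fun_eq_iff A.m_assoc)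
  have h1: "h \<one>\<^bsub>A\<^esub> = id" by (auto simp: h_def fun_eq_iff)
  have hb: "bij (h a)" if a: "a \<in> carrier A" for a
  proof (rule o_bij)
    show "h a \<circ> h (inv\<^bsub>A\<^esub> a) = id" using hc[of a "inv\<^bsub>A\<^esub> a"] a h1 by simp
    show "h (inv\<^bsub>A\<^esub> a) \<circ> h a = id" using hc[of "inv\<^bsub>A\<^esub> a" a] a h1 by simp
  qed
  have hin: "h a \<in> carrier SG" if "a \<in> carrier A" for a
    unfolding SG_carrier using hb[OF that] by simp
  have hom: "h \<in> hom A (SG :: ('a \<times> nat \<Rightarrow> 'a \<times> nat) monoid)"
    unfolding hom_def using hin hc by (auto simp: SG_mult)
  have inj: "inj_on h (carrier A)"
  proof (rule inj_onI)
    fix a b assume a: "a \<in> carrier A" and b: "b \<in> carrier A" and e: "h a = h b"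
    have "h a (\<one>\<^bsub>A\<^esub>, 0) = h b (\<one>\<^bsub>A\<^esub>, 0)" using e by simp
    then show "a = b" using a b by (simp add: h_def)
  qed
  show ?thesis
    using SG_group SG_invprop hom inj PJ_Z J0_Z Hom_Z stable
    by (metis SG_group SG_invprop)
qed

end
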